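(* Let $m,n,d,\boldsymbol\alpha,\boldsymbol\beta$ be as in the context, $t_0>1$, and let $\psi:[t_0,\infty)\to(0,\infty)$ be continuous and decreasing with $\frac{1}{2t}\le\psi(t)<\frac1t$ for all $t\ge t_0$, and such that there exist $C_\psi\ge1$, $\eta\in(0,1)$ with $F_\psi(t_2)\le C_\psi F_\psi(t_1)$ whenever $t_0\le t_1\le t_2\le t_1e^{(\log t_1)^\eta}$, where $F_\psi(t)=1-t\psi(t)$. Set $s_0=\frac md\log t_0-\frac nd\log\psi(t_0)$. Define $r:[s_0,\infty)\to\mathbb R$ by: for $s\ge s_0$ let $t=t(s)\ge t_0$ be the unique solution of $s=\frac md\log t-\frac nd\log\psi(t)$, and put $r(s)=-\frac1d\log(t\psi(t))$. Then $r$ is continuous with values in $(0,\frac1d)$, and: (a) there is $C_r\ge1$ and $s_*$ such that $r(s_2)\le C_r r(s_1)$ whenever $s_*\le s_1\le s_2\le s_1+s_1^\eta$; (b) for all fixed $\alpha,\beta>0$, $\sum_{k\ge t_0}k^{-1}F_\psi(k)^\alpha\log^\beta(1/F_\psi(k))=\infty$ if and only if $\sum_{k\ge s_0}r(k)^\alpha\log^\beta(1/r(k))=\infty$ (sums over integers); (c) for any $A\in M_{m,n}(\mathbb R/\mathbb Z)$: if $\Delta(g_s\Lambda_A)>\omega_1 r(s)$ for all sufficiently large $s$, then $A$ is $\psi_{\boldsymbol\alpha,\boldsymbol\beta}$-Dirichlet; and if $\Delta(g_s\Lambda_A)\le\omega_2r(s)$ for an unbounded set of $s$, then $A$ is not 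$\psi_{\boldsymbol\alpha,\boldsymbol\beta}$-Dirichlet.
   Context: $d=m+n$; weight vectors $\boldsymbol\alpha\in(\mathbb R_{>0})^m$, $\boldsymbol\beta\in(\mathbb R_{>0})^n$ with coordinates summing to 1. $\omega_1=\max\{m\alpha_i,n\beta_j\}$, $\omega_2=\min\{m\alpha_i,n\beta_j\}$ over $1\le i\le m,1\le j\le n$. $g_s=\mathrm{diag}(e^{\alpha_1s},\dots,e^{\alpha_ms},e^{-\beta_1s},\dots,e^{-\beta_ns})$; $\Lambda_A=\begin{pmatrix}I_m&A\\0&I_n\end{pmatrix}\mathbb Z^d$. For a unimodular lattice $\Lambda\subset\mathbb R^d$, $\Delta(\Lambda)=\sup_{\mathbf v\in\Lambda\setminus\{0\}}\log(1/\|\mathbf v\|)$ with $\|\cdot\|$ the sup norm. Quasi-norms $\|\mathbf x\|_{\boldsymbol\alpha}=\max_i|x_i|^{1/\alpha_i}$, $\|\mathbf y\|_{\boldsymbol\beta}=\max_j|y_j|^{1/\beta_j}$; $A$ is $\psi_{\boldsymbol\alpha,\boldsymbol\beta}$-Dirichlet if for all sufficiently large $t$ there are $\mathbf p\in\mathbb Z^m$, $\mathbf q\in\mathbb Z^n\setminus\{0\}$ with $\|A\mathbf q-\mathbf p\|_{\boldsymbol\alpha}<\psi(t)$, $\|\mathbf q\|_{\boldsymbol\beta}<t$ (a property of $A$ mod $M_{m,n}(\mathbb Z)$). *)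

theory Defs
  imports "HOL-Analysis.Analysis"
begin

text \<open>We model R^d = R^m x R^n as pairs of vectors of types real^'m and real^'n,
  with m = CARD('m), n = CARD('n). Matrices A in M_{m,n}(R) are real^'n^'m.\<close>


definition integer_vectors :: "(real^'a::finite) set" where
  "integer_vectors = {v. \<forall>i. v $ i \<in> \<int>}"

definition supnorm :: "(real^'m::finite) \<times> (real^'n::finite) \<Rightarrow> real" where
  "supnorm v = max (Max (range (\<lambda>i. \<bar>fst v $ i\<bar>))) (Max (range (\<lambda>j. \<bar>snd v $ j\<bar>)))"

definition Delta :: "((real^'m::finite) \<times> (real^'n::finite)) set \<Rightarrow> real" where
  "Delta L = (SUP v \<in> L - {0}. ln (1 / supnorm v))"

text \<open>Lambda_A = [[I_m, A],[0, I_n]] Z^d.\<close>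
definition Lambda :: "real^'n::finite^'m::finite \<Rightarrow> ((real^'m) \<times> (real^'n)) set" where
  "Lambda A = {(p + A *v q, q) | p q. p \<in> integer_vectors \<and> q \<in> integer_vectors}"

definition gflow :: "real^'m::finite \<Rightarrow> real^'n::finite \<Rightarrow> real
    \<Rightarrow> (real^'m) \<times> (real^'n) \<Rightarrow> (real^'m) \<times> (real^'n)" where
  "gflow \<alpha> \<beta> s v = ((\<chi> i. exp (\<alpha> $ i * s) * fst v $ i), (\<chi> j. exp (- \<beta> $ j * s) * snd v $ j))"

definition qnorm :: "real^'a::finite \<Rightarrow> real^'a \<Rightarrow> real" where
  "qnorm w x = Max (range (\<lambda>i. \<bar>x $ i\<bar> powr (1 / w $ i)))"

definition psi_Dirichlet :: "real^'m::finite \<Rightarrow> real^'n::finite \<Rightarrow> (real \<Rightarrow> real)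
    \<Rightarrow> real^'n^'m \<Rightarrow> bool" where
  "psi_Dirichlet \<alpha> \<beta> \<psi> A \<longleftrightarrow>
     (\<forall>\<^sub>F t in at_top. \<exists>p q. p \<in> integer_vectors \<and> q \<in> integer_vectors \<and> q \<noteq> 0 \<and>
        qnorm \<alpha> (A *v q - p) < \<psi> t \<and> qnorm \<beta> q < t)"

definition omega1 :: "real^'m::finite \<Rightarrow> real^'n::finite \<Rightarrow> real" where
  "omega1 \<alpha> \<beta> = Max ((\<lambda>i. real CARD('m) * \<alpha> $ i) ` UNIV \<union> (\<lambda>j. real CARD('n) * \<beta> $ j) ` UNIV)"

definition omega2 :: "real^'m::finite \<Rightarrow> real^'n::finite \<Rightarrow> real" where
  "omega2 \<alpha> \<beta> = Min ((\<lambda>i. real CARD('m) * \<alpha> $ i) ` UNIV \<union> (\<lambda>j. real CARD('n) * \<beta> $ j) ` UNIV)"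

definition Fpsi :: "(real \<Rightarrow> real) \<Rightarrow> real \<Rightarrow> real" where
  "Fpsi \<psi> t = 1 - t * \<psi> t"

definition s_of :: "nat \<Rightarrow> nat \<Rightarrow> (real \<Rightarrow> real) \<Rightarrow> real \<Rightarrow> real" where
  "s_of m n \<psi> t = real m / real (m + n) * ln t - real n / real (m + n) * ln (\<psi> t)"

definition t_of :: "nat \<Rightarrow> nat \<Rightarrow> (real \<Rightarrow> real) \<Rightarrow> real \<Rightarrow> real \<Rightarrow> real" where
  "t_of m n \<psi> t0 s = (THE t. t0 \<le> t \<and> s = s_of m n \<psi> t)"

definition r_fun :: "nat \<Rightarrow> nat \<Rightarrow> (real \<Rightarrow> real) \<Rightarrow> real \<Rightarrow> real \<Rightarrow> real" where
  "r_fun m n \<psi> t0 s = - (1 / real (m + n)) * ln (t_of m n \<psi> t0 s * \<psi> (t_of m n \<psi> t0 s))"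

end

theory Submission
  imports Defs
begin


locale rsetup =
  fixes m n :: nat and \<psi> :: "real \<Rightarrow> real" and t0 C \<eta> :: real
  assumes m1: "m \<ge> 1" and n1: "n \<ge> 1"
    and t0: "t0 > 1"
    and psi_cont: "continuous_on {t0..} \<psi>"
    and psi_decr: "\<forall>x y. t0 \<le> x \<longrightarrow> x \<le> y \<longrightarrow> \<psi> y \<le> \<psi> x"
    and psi_bounds: "\<forall>t\<ge>t0. 1 / (2 * t) \<le> \<psi> t \<and> \<psi> t < 1 / t"
    and C1: "C \<ge> 1" and eta: "0 < \<eta>" "\<eta> < 1"
    and F_doubling: "\<forall>t1 t2. t0 \<le> t1 \<longrightarrow> t1 \<le> t2 \<longrightarrow> t2 \<le> t1 * exp ((ln t1) powr \<eta>)
                        \<longrightarrow> Fpsi \<psi> t2 \<le> C * Fpsi \<psi> t1"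
begin

definition "d = real (m + n)"
definition "S = s_of m n \<psi>"
definition "R t = - (1 / d) * ln (t * \<psi> t)"
definition "T = t_of m n \<psi> t0"
definition "r = r_fun m n \<psi> t0"
definition "F = Fpsi \<psi>"
definition "s0 = S t0"

lemma d2: "d \<ge> 2" using m1 n1 by (simp add: d_def)

lemma basic:
  assumes "t \<ge> t0"
  shows "t > 1" "\<psi> t > 0" "1/2 \<le> t * \<psi> t" "t * \<psi> t < 1" "0 < F t" "F t \<le> 1/2"
    "R t = - (1/d) * ln (1 - F t)"
proof -
  show t1: "t > 1" using assms t0 by simp
  have b: "1 / (2 * t) \<le> \<psi> t" "\<psi> t < 1 / t" using psi_bounds assms by auto
  show "\<psi> t > 0" using b t1 by (smt (verit) divide_pos_pos)
  show "1/2 \<le> t * \<psi> t" using b t1 by (simp add: field_simps)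
  show "t * \<psi> t < 1" using b t1 by (simp add: field_simps)
  then show "0 < F t" by (simp add: F_def Fpsi_def)
  show "F t \<le> 1/2" using \<open>1/2 \<le> t * \<psi> t\<close> by (simp add: F_def Fpsi_def)
  show "R t = - (1/d) * ln (1 - F t)" by (simp add: R_def F_def Fpsi_def)
qed

lemma lnbounds:
  fixes x :: real assumes "0 < x" "x \<le> 1/2"
  shows "x \<le> - ln (1 - x)" "- ln (1 - x) \<le> 2 * x"
proof -
  have "ln (1 - x) \<le> (1 - x) - 1" using assms by (intro ln_le_minus_one) auto
  then show "x \<le> - ln (1 - x)" by simp
  have "ln (1 / (1 - x)) \<le> 1 / (1 - x) - 1" using assms by (intro ln_le_minus_one) auto
  also have "\<dots> = x / (1 - x)" using assms by (simp add: field_simps)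
  also have "\<dots> \<le> 2 * x" using assms by (simp add: field_simps)
  finally show "- ln (1 - x) \<le> 2 * x" using assms by (simp add: ln_div)
qed

lemma R_bounds:
  assumes "t \<ge> t0"
  shows "F t / d \<le> R t" "R t \<le> 2 * F t / d" "R t \<le> F t" "F t \<le> d * R t" "0 < R t" "R t < 1 / d"
    "R t \<le> 1/2"
proof -
  note b = basic[OF assms]
  have dpos: "d > 0" using d2 by simp
  have l: "F t \<le> - ln (1 - F t)" "- ln (1 - F t) \<le> 2 * F t" using lnbounds b(5,6) by auto
  have "F t / d \<le> (- ln (1 - F t)) / d" using l dpos by (intro divide_right_mono) auto
  then show "F t / d \<le> R t" using b(7) by simp
  have "(- ln (1 - F t)) / d \<le> 2 * F t / d" using l dpos by (intro divide_right_mono) auto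
  then show "R t \<le> 2 * F t / d" using b(7) by simp
  have "2 * F t \<le> d * F t" using d2 b(5) by (intro mult_right_mono) auto
  then have "2 * F t / d \<le> F t" using dpos by (simp add: divide_le_eq mult.commute)
  then show "R t \<le> F t" using \<open>R t \<le> 2 * F t / d\<close> by simp
  show "F t \<le> d * R t" using \<open>F t / d \<le> R t\<close> dpos by (simp add: field_simps)
  show "0 < R t" using \<open>F t / d \<le> R t\<close> b(5) dpos by (smt (verit) divide_pos_pos)
  have "ln (1/2) \<le> ln (1 - F t)" using b(5,6) by (subst ln_le_cancel_iff) auto
  moreover have "ln (1/2::real) = - ln 2" by (simp add: ln_div)
  ultimately have "- ln (1 - F t) < 1" using ln_2_less_1 by linarith
  then have "(- ln (1 - F t)) / d < 1 / d" using dpos by (intro divide_strict_right_mono) auto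
  then show "R t < 1 / d" using b(7) by simp
  show "R t \<le> 1/2" using \<open>R t \<le> F t\<close> b(6) by simp
qed

lemma S_eq: assumes "t \<ge> t0" shows "S t = ln t + n * R t"
proof -
  note b = basic[OF assms]
  have "ln (t * \<psi> t) = ln t + ln (\<psi> t)" using b by (simp add: ln_mult)
  moreover have "d = real m + real n" by (simp add: d_def)
  moreover have "d > 0" using d2 by simp
  ultimately have e: "real m / d = 1 - real n / d" by (simp add: field_simps)
  have "S t = real m / d * ln t - real n / d * ln (\<psi> t)" unfolding S_def s_of_def d_def by simp
  also have "\<dots> = ln t + n * (- (1 / d) * (ln t + ln (\<psi> t)))" unfolding e by (simp add: algebra_simps)
  finally show ?thesis using \<open>ln (t * \<psi> t) = ln t + ln (\<psi> t)\<close> by (simp add: R_def)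
qed

lemma exp_S1: assumes "t \<ge> t0" shows "exp (- S t - m * R t) = \<psi> t"
proof -
  note b = basic[OF assms]
  have "ln (t * \<psi> t) = ln t + ln (\<psi> t)" using b by (simp add: ln_mult)
  moreover have "d = real m + real n" by (simp add: d_def)
  moreover have "d > 0" using d2 by simp
  ultimately have e: "real m / d = 1 - real n / d" by (simp add: field_simps)
  have "- S t - m * R t = - (real m / d * ln t - real n / d * ln (\<psi> t)) - m * (- (1 / d) * (ln t + ln (\<psi> t)))"
    unfolding S_def s_of_def d_def R_def using \<open>ln (t * \<psi> t) = ln t + ln (\<psi> t)\<close> by simp
  also have "\<dots> = (real m / d + real n / d) * ln (\<psi> t)" by (simp add: algebra_simps)
  also have "real m / d + real n / d = 1" using e by simp
  finally have "- S t - m * R t = ln (\<psi> t)" by simp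
  then show ?thesis using b by simp
qed

lemma exp_S2: assumes "t \<ge> t0" shows "exp (S t - n * R t) = t"
  using S_eq[OF assms] basic(1)[OF assms] by simp

lemma S_strict: assumes "t0 \<le> x" "x < y" shows "S x < S y"
proof -
  have bx: "\<psi> x > 0" "x > 1" using basic[OF assms(1)] by auto
  have by': "\<psi> y > 0" using basic[of y] assms by auto
  have "\<psi> y \<le> \<psi> x" using psi_decr assms by auto
  then have "ln (\<psi> y) \<le> ln (\<psi> x)" using bx by' by simp
  moreover have "ln x < ln y" using assms bx by simp
  moreover have "real m / real (m+n) > 0" using m1 by simp
  ultimately have "real m / real (m+n) * ln x < real m / real (m+n) * ln y"
    "real n / real (m+n) * ln (\<psi> y) \<le> real n / real (m+n) * ln (\<psi> x)"
    by (intro mult_strict_left_mono mult_left_mono; simp)+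
  then show ?thesis unfolding S_def s_of_def by linarith
qed

lemma S_mono: assumes "t0 \<le> x" "x \<le> y" shows "S x \<le> S y"
  using S_strict[of x y] assms by (cases "x = y") auto

lemma S_cont: "continuous_on {t0..} S"
proof -
  have pos: "\<And>t. t \<ge> t0 \<Longrightarrow> \<psi> t > 0" using basic by auto
  have "continuous_on {t0..} (\<lambda>t. real m / real (m+n) * ln t - real n / real (m+n) * ln (\<psi> t))"
    apply (intro continuous_intros psi_cont)
    using t0 pos by (auto, force)
  then show ?thesis unfolding S_def s_of_def by (simp add: fun_eq_iff)
qed

lemma S_ge: assumes "t \<ge> t0" shows "ln t \<le> S t" "S t < ln t + 1"
proof -
  have "0 < R t" "R t < 1/d" using R_bounds assms by auto
  moreover have "real n < d" using m1 by (simp add: d_def)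
  moreover have "real n * R t < real n * (1/d)" using \<open>R t < 1/d\<close> n1 by (intro mult_strict_left_mono) auto
  moreover have "real n * (1/d) \<le> 1" using \<open>real n < d\<close> d2 by (simp add: field_simps)
  moreover have "real n / d < 1" using \<open>real n < d\<close> d2 by (simp add: divide_less_eq)
  ultimately have nr1: "real n * R t < 1" by linarith
  have "0 \<le> real n * R t" using \<open>0 < R t\<close> by simp
  with nr1 show "ln t \<le> S t" "S t < ln t + 1" using S_eq[OF assms] by auto
qed

lemma ex1: assumes "s \<ge> s0" shows "\<exists>!t. t0 \<le> t \<and> s = S t"
proof -
  define b where "b = max t0 (exp s)"
  have "S t0 \<le> s" using assms by (simp add: s0_def)
  moreover have "s \<le> S b"
  proof -
    have "s = ln (exp s)" by simp
    also have "\<dots> \<le> ln b" using t0 by (subst ln_le_cancel_iff) (auto simp: b_def)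
    also have "\<dots> \<le> S b" using S_ge[of b] by (simp add: b_def)
    finally show ?thesis .
  qed
  moreover have "continuous_on {t0..b} S" using S_cont by (rule continuous_on_subset) auto
  ultimately obtain t where "t0 \<le> t" "S t = s" using IVT'[of S t0 s b] by (auto simp: b_def)
  moreover have "t' = t" if "t0 \<le> t'" "s = S t'" for t'
    using S_strict[of t t'] S_strict[of t' t] that \<open>t0 \<le> t\<close> \<open>S t = s\<close>
    by (cases t t' rule: linorder_cases) auto
  ultimately show ?thesis by metis
qed

lemma T_prop: assumes "s \<ge> s0" shows "t0 \<le> T s" "S (T s) = s"
proof -
  have "t0 \<le> T s \<and> s = S (T s)" unfolding T_def t_of_def S_def[symmetric]
    by (rule theI') (rule ex1[OF assms])
  then show "t0 \<le> T s" "S (T s) = s" by auto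
qed

lemma T_S: assumes "t \<ge> t0" shows "T (S t) = t"
  unfolding T_def t_of_def S_def[symmetric]
proof (rule the_equality)
  show "t0 \<le> t \<and> S t = S t" using assms by simp
  fix t' assume "t0 \<le> t' \<and> S t = S t'"
  then show "t' = t" using S_strict[of t t'] S_strict[of t' t] assms
    by (cases t t' rule: linorder_cases) auto
qed

lemma s0_le: assumes "t \<ge> t0" shows "s0 \<le> S t"
  using S_mono assms by (simp add: s0_def)

lemma r_eq: "r s = R (T s)"
  by (simp add: r_def r_fun_def R_def T_def d_def)

lemma T_mono: assumes "s0 \<le> s1" "s1 \<le> s2" shows "T s1 \<le> T s2"
proof (rule ccontr)
  assume "\<not> ?thesis"
  then have "S (T s2) < S (T s1)" using S_strict T_prop assms by (meson dual_order.trans not_le)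
  then show False using T_prop assms by auto
qed

lemma lnT: assumes "s \<ge> s0" shows "ln (T s) = s - n * r s" "s - 1 < ln (T s)" "ln (T s) \<le> s"
proof -
  show "ln (T s) = s - n * r s" using S_eq[OF T_prop(1)[OF assms]] T_prop(2)[OF assms] r_eq by simp
  show "s - 1 < ln (T s)" "ln (T s) \<le> s" using S_ge[OF T_prop(1)[OF assms]] T_prop(2)[OF assms] by auto
qed

end


lemma powr_sub1: fixes u \<eta> :: real assumes "u \<ge> 1" "0 \<le> \<eta>" "\<eta> \<le> 1"
  shows "(u + 1) powr \<eta> \<le> u powr \<eta> + 1"
proof -
  have "u + 1 = u * (1 + 1/u)" using assms by (simp add: field_simps)
  then have "(u + 1) powr \<eta> = u powr \<eta> * (1 + 1/u) powr \<eta>" using assms by (simp add: powr_mult)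
  also have "(1 + 1/u) powr \<eta> \<le> (1 + 1/u) powr 1" using assms by (intro powr_mono) auto
  then have "u powr \<eta> * (1 + 1/u) powr \<eta> \<le> u powr \<eta> * (1 + 1/u)" using assms by (intro mult_left_mono) auto
  also have "\<dots> = u powr \<eta> + u powr \<eta> / u" using assms by (simp add: field_simps)
  also have "u powr \<eta> / u = u powr (\<eta> - 1)" using assms by (simp add: powr_diff)
  also have "u powr (\<eta> - 1) \<le> u powr 0" using assms by (intro powr_mono) auto
  also have "u powr 0 = 1" using assms by simp
  finally show ?thesis by simp
qed

context rsetup begin

lemma T_cont: "continuous_on {s0..} T"
proof (subst continuous_on_eq_continuous_within, intro ballI)
  fix x assume x: "x \<in> {s0..}"
  define b where "b = T x + 1"
  have Tx: "t0 \<le> T x" "S (T x) = x" using T_prop x by auto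
  have b0: "t0 \<le> b" using Tx by (simp add: b_def)
  have xb: "x < S b" using S_strict[of "T x" b] Tx by (simp add: b_def)
  have img: "S ` {t0..b} = {s0..S b}"
  proof
    show "S ` {t0..b} \<subseteq> {s0..S b}" using S_mono s0_le by auto
    show "{s0..S b} \<subseteq> S ` {t0..b}"
    proof
      fix y assume y: "y \<in> {s0..S b}"
      then have "t0 \<le> T y" "S (T y) = y" using T_prop by auto
      moreover have "T y \<le> T (S b)" using y s0_le b0 by (intro T_mono) auto
      then have "T y \<le> b" using T_S b0 by simp
      ultimately show "y \<in> S ` {t0..b}" by (metis atLeastAtMost_iff image_eqI)
    qed
  qed
  have "continuous_on {t0..b} S" using S_cont by (rule continuous_on_subset) auto
  then have "continuous_on (S ` {t0..b}) T"
    by (rule continuous_on_inv) (auto simp: T_S)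
  then have c: "continuous_on {s0..S b} T" using img by simp
  have "x \<in> {s0..S b}" using x xb by auto
  then have "(T \<longlongrightarrow> T x) (at x within {s0..S b})"
    using c by (simp add: continuous_on_eq_continuous_within continuous_within)
  moreover have "eventually (\<lambda>y. y \<in> {s0..S b} \<longleftrightarrow> y \<in> {s0..}) (at x)"
    using order_tendstoD(2)[OF tendsto_ident_at xb] by eventually_elim auto
  ultimately have "(T \<longlongrightarrow> T x) (at x within {s0..})" by (rule Lim_transform_within_set)
  then show "continuous (at x within {s0..}) T" by (simp add: continuous_within)
qed

lemma r_cont: "continuous_on {s0..} r"
proof -
  have Tin: "T ` {s0..} \<subseteq> {t0..}" using T_prop by auto
  have pc: "continuous_on {s0..} (\<lambda>s. \<psi> (T s))"
    using continuous_on_compose2[OF psi_cont T_cont Tin] by simp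
  have pos: "T s * \<psi> (T s) > 0" if "s \<ge> s0" for s
  proof -
    have "t0 \<le> T s" using T_prop that by auto
    then have "1 < T s" "0 < \<psi> (T s)" using basic by auto
    then show ?thesis by simp
  qed
  have "continuous_on {s0..} (\<lambda>s. - (1/d) * ln (T s * \<psi> (T s)))"
    apply (intro continuous_intros T_cont pc)
    using pos by (metis atLeast_iff less_irrefl)
  then show ?thesis by (simp add: r_eq R_def fun_eq_iff)
qed

lemma r_bounds: "s \<ge> s0 \<Longrightarrow> 0 < r s \<and> r s < 1 / d"
  using R_bounds T_prop r_eq by auto

lemma partA: "\<exists>Cr\<ge>1. \<exists>s_star\<ge>s0. \<forall>s1 s2. s_star \<le> s1 \<longrightarrow> s1 \<le> s2 \<longrightarrow> s2 \<le> s1 + s1 powr \<eta>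
          \<longrightarrow> r s2 \<le> Cr * r s1"
proof (intro exI conjI allI impI)
  have "1 * 1 \<le> C * C" using C1 by (intro mult_mono) auto
  then have "1 * 1 \<le> (C * C) * d" using d2 by (intro mult_mono) auto
  then show "1 \<le> C * C * d" by simp
  show "s0 \<le> max s0 (2 + 2 powr (1/\<eta>))" by simp
  fix s1 s2 assume s1: "max s0 (2 + 2 powr (1/\<eta>)) \<le> s1" and s12: "s1 \<le> s2" and s2: "s2 \<le> s1 + s1 powr \<eta>"
  define t1 where "t1 = T s1"
  define t2 where "t2 = T s2"
  define L where "L = ln t1"
  have s1a: "s0 \<le> s1" "2 + 2 powr (1/\<eta>) \<le> s1" using s1 by auto
  have t1: "t0 \<le> t1" using T_prop s1a by (simp add: t1_def)
  have t12: "t1 \<le> t2" using T_mono s1a s12 by (simp add: t1_def t2_def)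
  have t2: "t0 \<le> t2" using t1 t12 by simp
  have L1: "s1 - 1 < L" using lnT s1a by (simp add: L_def t1_def)
  have lt2: "ln t2 \<le> s2" using lnT s1a s12 by (simp add: t2_def)
  have u1: "1 \<le> s1 - 1" using s1a by (smt (verit) powr_ge_zero)
  have "s1 powr \<eta> \<le> (s1 - 1) powr \<eta> + 1" using powr_sub1[of "s1 - 1" \<eta>] u1 eta by simp
  moreover have "(s1 - 1) powr \<eta> \<le> L powr \<eta>" using u1 L1 eta by (intro powr_mono2) auto
  moreover have "2 \<le> L powr \<eta>"
  proof -
    have "(2 powr (1/\<eta>)) powr \<eta> \<le> L powr \<eta>" using s1a L1 eta by (intro powr_mono2) auto
    moreover have "(2 powr (1/\<eta>)) powr \<eta> = 2" using eta by (simp add: powr_powr)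
    ultimately show ?thesis by simp
  qed
  ultimately have key: "ln t2 \<le> L + 2 * L powr \<eta>" using lt2 s2 L1 by linarith
  have L0: "0 \<le> L" using L1 u1 by simp
  have t1pos: "t1 > 0" using t1 t0 by simp
  have FF: "F t2 \<le> C * C * F t1"
  proof (cases "t2 \<le> t1 * exp (L powr \<eta>)")
    case True
    then have "F t2 \<le> C * F t1" using F_doubling t1 t12 by (simp add: F_def L_def)
    also have "\<dots> \<le> C * C * F t1"
    proof -
      have "1 * F t1 \<le> C * F t1" using C1 basic(5)[OF t1] by (intro mult_right_mono) auto
      then have "C * (1 * F t1) \<le> C * (C * F t1)" using C1 by (intro mult_left_mono) auto
      then show ?thesis by (simp add: mult.assoc)
    qed
    finally show ?thesis .
  next
    case False
    define t' where "t' = t1 * exp (L powr \<eta>)"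
    have t1t': "t1 \<le> t'" using t1pos by (simp add: t'_def)
    have t't2: "t' \<le> t2" using False by (simp add: t'_def)
    have lt': "ln t' = L + L powr \<eta>" using t1pos by (simp add: t'_def L_def ln_mult)
    have "L powr \<eta> \<le> (ln t') powr \<eta>" using lt' L0 eta by (intro powr_mono2) auto
    then have "ln t2 \<le> ln t' + (ln t') powr \<eta>" using key lt' by simp
    have t'pos: "t' > 0" using t1pos t1t' by simp
    have t2pos: "t2 > 0" using t1pos t12 by simp
    have "t2 = exp (ln t2)" using t2pos by simp
    also have "\<dots> \<le> exp (ln t' + (ln t') powr \<eta>)" using \<open>ln t2 \<le> ln t' + (ln t') powr \<eta>\<close> by simp
    also have "\<dots> = t' * exp ((ln t') powr \<eta>)" using t'pos by (simp add: exp_add)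
    finally have "t2 \<le> t' * exp ((ln t') powr \<eta>)" .
    then have "F t2 \<le> C * F t'" using F_doubling t1 t1t' t't2 by (simp add: F_def)
    also have "F t' \<le> C * F t1" using F_doubling t1 t1t' by (simp add: F_def t'_def L_def)
    then have "C * F t' \<le> C * (C * F t1)" using C1 by simp
    finally show ?thesis by simp
  qed
  have "r s2 = R t2" by (simp add: r_eq t2_def)
  also have "\<dots> \<le> F t2" using R_bounds t2 by simp
  also have "\<dots> \<le> C * C * F t1" by (rule FF)
  also have "\<dots> \<le> C * C * (d * R t1)" using R_bounds(4)[OF t1] C1 by simp
  also have "\<dots> = C * C * d * r s1" by (simp add: r_eq t1_def)
  finally show "r s2 \<le> C * C * d * r s1" .
qed

end


definition G :: "real \<Rightarrow> real \<Rightarrow> real \<Rightarrow> real" where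
  "G a b x = x powr a * (ln (1 / x)) powr b"

lemma G_nonneg: "G a b x \<ge> 0" by (simp add: G_def)

lemma Gcomp:
  fixes a b Cc :: real
  assumes ab: "a > 0" "b > 0" and Cc: "Cc \<ge> 1"
  shows "\<exists>K>0. \<forall>x y. 0 < x \<longrightarrow> x \<le> 1/2 \<longrightarrow> 0 < y \<longrightarrow> y \<le> 1/2 \<longrightarrow> y \<le> Cc * x
            \<longrightarrow> G a b y \<le> K * G a b x"
proof -
  define A0 where "A0 = 1 + b / (a * ln 2)"
  define K where "K = max (Cc powr a) (A0 powr b)"
  have A0: "A0 \<ge> 1" using ab by (simp add: A0_def)
  have Kpos: "K > 0" using Cc A0 by (simp add: K_def max_def)
  show ?thesis
  proof (intro exI[of _ K] conjI allI impI Kpos)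
    fix x y :: real
    assume x: "0 < x" "x \<le> 1/2" and y: "0 < y" "y \<le> 1/2" and yx: "y \<le> Cc * x"
    have lx: "ln 2 \<le> ln (1/x)" using x by (subst ln_le_cancel_iff) (auto simp: field_simps)
    have ln2: "ln (2::real) > 0" by simp
    have Gx0: "0 \<le> G a b x" by (rule G_nonneg)
    show "G a b y \<le> K * G a b x"
    proof (cases "x < y")
      case True
      have "y powr a \<le> (Cc * x) powr a" using yx y ab by (intro powr_mono2) auto
      also have "\<dots> = Cc powr a * x powr a" using Cc x by (simp add: powr_mult)
      finally have 1: "y powr a \<le> Cc powr a * x powr a" .
      have "ln (1/y) \<le> ln (1/x)" using True x y by (subst ln_le_cancel_iff) (auto simp: field_simps)
      moreover have "0 \<le> ln (1/y)" using y by simp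
      ultimately have 2: "ln (1/y) powr b \<le> ln (1/x) powr b" using ab by (intro powr_mono2) auto
      have "G a b y \<le> (Cc powr a * x powr a) * ln (1/x) powr b"
        unfolding G_def using 1 2 by (intro mult_mono) auto
      also have "\<dots> = Cc powr a * G a b x" by (simp add: G_def)
      also have "\<dots> \<le> K * G a b x" using Gx0 by (intro mult_right_mono) (auto simp: K_def)
      finally show ?thesis .
    next
      case False
      define \<rho> where "\<rho> = x / y"
      define \<epsilon> where "\<epsilon> = a / b"
      have eps: "\<epsilon> > 0" using ab by (simp add: \<epsilon>_def)
      have rho1: "\<rho> \<ge> 1" using False y by (simp add: \<rho>_def field_simps)
      have yeq: "y = x / \<rho>" using x y by (simp add: \<rho>_def)
      have ly: "ln (1/y) = ln (1/x) + ln \<rho>" using x y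
        by (simp add: \<rho>_def ln_div)
      have "\<epsilon> * ln \<rho> = ln (\<rho> powr \<epsilon>)" using rho1 by (simp add: ln_powr)
      also have "\<dots> \<le> \<rho> powr \<epsilon> - 1" using rho1 by (intro ln_le_minus_one) auto
      finally have "ln \<rho> \<le> \<rho> powr \<epsilon> / \<epsilon>" using eps by (simp add: field_simps)
      have rpe: "\<rho> powr \<epsilon> \<ge> 1" using rho1 eps by (simp add: ge_one_powr_ge_zero)
      have "ln \<rho> \<le> ln (1/x) * (\<rho> powr \<epsilon> / (\<epsilon> * ln 2))"
      proof -
        have "ln \<rho> \<le> \<rho> powr \<epsilon> / \<epsilon>" by fact
        also have "\<dots> = ln 2 * (\<rho> powr \<epsilon> / (\<epsilon> * ln 2))" using ln2 by (simp add: field_simps)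
        also have "\<dots> \<le> ln (1/x) * (\<rho> powr \<epsilon> / (\<epsilon> * ln 2))"
          using lx eps rpe by (intro mult_right_mono) auto
        finally show ?thesis .
      qed
      then have "ln (1/y) \<le> ln (1/x) * (1 + \<rho> powr \<epsilon> / (\<epsilon> * ln 2))"
        using ly by (simp add: algebra_simps)
      also have "\<dots> \<le> ln (1/x) * (A0 * \<rho> powr \<epsilon>)"
      proof -
        have "1 + \<rho> powr \<epsilon> / (\<epsilon> * ln 2) \<le> \<rho> powr \<epsilon> + \<rho> powr \<epsilon> / (\<epsilon> * ln 2)" using rpe by simp
        also have "\<dots> = A0 * \<rho> powr \<epsilon>" using ab by (simp add: A0_def \<epsilon>_def field_simps)
        moreover have "0 \<le> ln (1/x)" using lx ln2 by linarith
        ultimately show ?thesis by (intro mult_left_mono) auto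
      qed
      finally have ly2: "ln (1/y) \<le> ln (1/x) * (A0 * \<rho> powr \<epsilon>)" .
      have "ln (1/y) powr b \<le> (ln (1/x) * (A0 * \<rho> powr \<epsilon>)) powr b"
        using ly2 y ab by (intro powr_mono2) auto
      also have "\<dots> = ln (1/x) powr b * A0 powr b * \<rho> powr a"
        using lx ln2 A0 rpe ab rho1 eps
        by (simp add: powr_mult powr_powr \<epsilon>_def)
      finally have 2: "ln (1/y) powr b \<le> ln (1/x) powr b * A0 powr b * \<rho> powr a" .
      have 1: "y powr a = x powr a / \<rho> powr a" using yeq x rho1 by (simp add: powr_divide)
      have rpa: "\<rho> powr a > 0" using rho1 by simp
      have "G a b y \<le> (x powr a / \<rho> powr a) * (ln (1/x) powr b * A0 powr b * \<rho> powr a)"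
        unfolding G_def 1 using 2 by (intro mult_left_mono) auto
      also have "\<dots> = A0 powr b * G a b x" using rpa by (simp add: G_def field_simps)
      also have "\<dots> \<le> K * G a b x" using Gx0 by (intro mult_right_mono) (auto simp: K_def)
      finally show ?thesis .
    qed
  qed
qed



lemma block_summable:
  fixes u v :: "nat \<Rightarrow> real" and N :: "nat \<Rightarrow> nat" and J0 :: nat and c1 c2 :: real
  assumes u0: "\<And>k. 0 \<le> u k" and v0: "\<And>j. 0 \<le> v j"
    and Nmono: "\<And>j. j \<ge> J0 \<Longrightarrow> N j \<le> N (Suc j)"
    and up: "\<And>j. j \<ge> J0 \<Longrightarrow> sum u {N j..<N (Suc j)} \<le> c1 * v j"
    and low: "\<And>j. j \<ge> J0 \<Longrightarrow> v (Suc j) \<le> c2 * sum u {N j..<N (Suc j)}"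
    and Nbig: "\<And>M. M \<le> N (J0 + M)"
    and c: "c1 \<ge> 0" "c2 \<ge> 0"
  shows "summable u \<longleftrightarrow> summable v"
proof -
  define B where "B j = sum u {N j..<N (Suc j)}" for j
  have tel: "N J0 \<le> N (J0 + M) \<and> sum u {N J0..<N (J0 + M)} = (\<Sum>i<M. B (J0 + i))" for M
  proof (induction M)
    case 0 then show ?case by simp
  next
    case (Suc M)
    have m: "N (J0 + M) \<le> N (J0 + Suc M)" using Nmono[of "J0 + M"] by simp
    have "sum u {N J0..<N (J0 + Suc M)} = sum u {N J0..<N (J0 + M)} + sum u {N (J0 + M)..<N (J0 + Suc M)}"
      using Suc m by (intro sum.atLeastLessThan_concat[symmetric]) auto
    also have "\<dots> = (\<Sum>i<Suc M. B (J0 + i))" using Suc by (simp add: B_def)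
    finally show ?case using Suc m by simp
  qed
  show ?thesis
  proof
    assume su: "summable u"
    have "summable (\<lambda>i. v (i + Suc J0))"
    proof (rule summableI_nonneg_bounded)
      show "0 \<le> v (i + Suc J0)" for i by (rule v0)
      fix M
      have "(\<Sum>i<M. v (i + Suc J0)) \<le> (\<Sum>i<M. c2 * B (J0 + i))"
        by (intro sum_mono) (use low[of "J0 + _"] in \<open>simp add: B_def add.commute\<close>)
      also have "\<dots> = c2 * sum u {N J0..<N (J0 + M)}" using tel by (simp add: sum_distrib_left)
      also have "\<dots> \<le> c2 * suminf u" using su u0 c by (intro mult_left_mono sum_le_suminf) auto
      finally show "(\<Sum>i<M. v (i + Suc J0)) \<le> c2 * suminf u" .
    qed
    then show "summable v" by (rule summable_iff_shift[THEN iffD1])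
  next
    assume sv: "summable v"
    have sv': "summable (\<lambda>i. v (i + J0))" using sv by simp
    show "summable u"
    proof (rule summableI_nonneg_bounded)
      show "0 \<le> u k" for k by (rule u0)
      fix M
      have "(\<Sum>k<M. u k) \<le> (\<Sum>k<N (J0 + M). u k)"
        using Nbig[of M] u0 by (intro sum_mono2) auto
      also have "\<dots> = (\<Sum>k<N J0. u k) + sum u {N J0..<N (J0 + M)}"
        using tel[of M] sum.atLeastLessThan_concat[of 0 "N J0" "N (J0 + M)" u]
        by (simp add: lessThan_atLeast0)
      also have "sum u {N J0..<N (J0 + M)} \<le> (\<Sum>i<M. c1 * v (i + J0))"
        using tel[of M] by (simp, intro sum_mono) (use up in \<open>simp add: B_def add.commute\<close>)
      also have "\<dots> = c1 * (\<Sum>i<M. v (i + J0))" by (simp add: sum_distrib_left)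
      also have "\<dots> \<le> c1 * suminf (\<lambda>i. v (i + J0))" using sv' v0 c by (intro mult_left_mono sum_le_suminf) auto
      finally show "(\<Sum>k<M. u k) \<le> (\<Sum>k<N J0. u k) + c1 * suminf (\<lambda>i. v (i + J0))" by simp
    qed
  qed
qed



context rsetup begin

definition "\<delta> = 1 - real n / d"

lemma delta_pos: "\<delta> > 0"
proof -
  have "real n < d" using m1 by (simp add: d_def)
  then have "real n / d < 1" using d2 by (simp add: divide_less_eq)
  then show ?thesis by (simp add: \<delta>_def)
qed

lemma nd_lt1: "real n / d < 1" using delta_pos by (simp add: \<delta>_def)

lemma block_facts:
  fixes j :: real
  assumes j1: "s0 \<le> j" and j2: "1 + 2 powr (1/\<eta>) \<le> j"
  defines "a \<equiv> T j" and "b \<equiv> T (j + 1)"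
  shows "t0 \<le> a" "a \<le> b" "b \<le> a * exp 2" "a * exp \<delta> \<le> b" "exp j \<le> b"
    "\<And>t. a \<le> t \<Longrightarrow> t \<le> b \<Longrightarrow> F t \<le> C * F a"
    "\<And>t. a \<le> t \<Longrightarrow> t \<le> b \<Longrightarrow> F b \<le> C * F t"
proof -
  have j1': "s0 \<le> j + 1" using j1 by simp
  show ta: "t0 \<le> a" using T_prop j1 by (simp add: a_def)
  show ab: "a \<le> b" using T_mono j1 by (simp add: a_def b_def)
  have apos: "a > 0" using ta t0 by simp
  have bpos: "b > 0" using ab apos by simp
  have la: "ln a = j - n * r j" using lnT j1 by (simp add: a_def)
  have lb: "ln b = (j + 1) - n * r (j + 1)" using lnT j1' by (simp add: b_def)
  have rj: "0 < r j" "r j < 1/d" "0 < r (j+1)" "r (j+1) < 1/d" using r_bounds j1 j1' by auto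
  have "real n * r j < real n * (1/d)" "real n * r (j+1) < real n * (1/d)"
    using rj n1 by (intro mult_strict_left_mono; simp)+
  moreover have "0 \<le> real n * r j" "0 \<le> real n * r (j+1)" using rj by auto
  ultimately have diff: "\<delta> < ln b - ln a" "ln b - ln a < 2" using la lb nd_lt1 by (auto simp: \<delta>_def)
  have "b = a * exp (ln b - ln a)" using apos bpos by (simp add: exp_diff)
  moreover have "exp (ln b - ln a) \<le> exp 2" "exp \<delta> \<le> exp (ln b - ln a)" using diff by auto
  ultimately show b2: "b \<le> a * exp 2" "a * exp \<delta> \<le> b" using apos
    by (metis mult_left_mono less_imp_le)+
  have "j - 1 < ln b" using lnT(2)[OF j1'] by (simp add: b_def)
  then have "j < ln b + 1" by simp
  have "j \<le> ln b"
    using lb rj(3,4) nd_lt1 \<open>real n * r (j+1) < real n * (1/d)\<close> by simp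
  then show "exp j \<le> b" using bpos by (metis exp_le_cancel_iff exp_ln)
  have lna: "j - 1 < ln a" using lnT(2)[OF j1] by (simp add: a_def)
  have "2 \<le> (ln a) powr \<eta>"
  proof -
    have "(2 powr (1/\<eta>)) powr \<eta> \<le> (ln a) powr \<eta>" using j2 lna eta by (intro powr_mono2) auto
    moreover have "(2 powr (1/\<eta>)) powr \<eta> = 2" using eta by (simp add: powr_powr)
    ultimately show ?thesis by simp
  qed
  then have bexp: "b \<le> a * exp ((ln a) powr \<eta>)" using b2 apos
    by (smt (verit, best) exp_le_cancel_iff mult_left_mono)
  show "F t \<le> C * F a" if "a \<le> t" "t \<le> b" for t
    using F_doubling ta that bexp by (auto simp: F_def)
  show "F b \<le> C * F t" if "a \<le> t" "t \<le> b" for t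
  proof -
    have la0: "0 \<le> ln a" using ta t0 by simp
    have "ln a \<le> ln t" using that apos by simp
    then have "(ln a) powr \<eta> \<le> (ln t) powr \<eta>" using la0 eta by (intro powr_mono2) auto
    then have "a * exp ((ln a) powr \<eta>) \<le> t * exp ((ln t) powr \<eta>)"
      using that apos by (intro mult_mono) auto
    then have "b \<le> t * exp ((ln t) powr \<eta>)" using bexp by simp
    then show ?thesis using F_doubling ta that by (auto simp: F_def)
  qed
qed

end


context rsetup begin

lemma partB:
  fixes a b :: real assumes ab: "a > 0" "b > 0"
  shows "(\<not> summable (\<lambda>k::nat. if t0 \<le> real k
              then (1 / real k) * Fpsi \<psi> (real k) powr a * (ln (1 / Fpsi \<psi> (real k))) powr b else 0)
          \<longleftrightarrow> \<not> summable (\<lambda>k::nat. if s0 \<le> real k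
              then r (real k) powr a * (ln (1 / r (real k))) powr b else 0))"
proof -
  define u where "u = (\<lambda>k::nat. if t0 \<le> real k
              then (1 / real k) * Fpsi \<psi> (real k) powr a * (ln (1 / Fpsi \<psi> (real k))) powr b else 0)"
  define v where "v = (\<lambda>k::nat. if s0 \<le> real k
              then r (real k) powr a * (ln (1 / r (real k))) powr b else 0)"
  define Cc where "Cc = max C d"
  have Cc1: "Cc \<ge> 1" using C1 by (simp add: Cc_def)
  obtain K where K: "K > 0" and KG: "\<And>x y. 0 < x \<Longrightarrow> x \<le> 1/2 \<Longrightarrow> 0 < y \<Longrightarrow> y \<le> 1/2 \<Longrightarrow> y \<le> Cc * x
            \<Longrightarrow> G a b y \<le> K * G a b x"
    using Gcomp[OF ab Cc1] by blast
  define e0 where "e0 = exp (- \<delta>)"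
  have e0: "0 < e0" "e0 < 1" using delta_pos by (auto simp: e0_def)
  define c0 where "c0 = (1 - e0) / 2"
  have c0: "c0 > 0" using e0 by (simp add: c0_def)
  obtain J0 :: nat where J0: "max (max s0 1) (max (1 + 2 powr (1/\<eta>)) (1 / c0)) \<le> real J0"
    using real_arch_simple by blast
  define N where "N j = nat \<lceil>T (real j)\<rceil>" for j
  have u0: "0 \<le> u k" for k by (simp add: u_def)
  have v0: "0 \<le> v k" for k by (simp add: v_def)
  have ueq: "u k = (1 / real k) * G a b (F (real k))" if "t0 \<le> real k" for k
    using that by (simp add: u_def G_def F_def)
  have veq: "v k = G a b (R (T (real k)))" if "s0 \<le> real k" for k
    using that by (simp add: v_def G_def r_eq)
  have blk: "N j \<le> N (Suc j) \<and> sum u {N j..<N (Suc j)} \<le> (exp 2 * K * K) * v j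
     \<and> v (Suc j) \<le> (K * K / c0) * sum u {N j..<N (Suc j)}" if j: "j \<ge> J0" for j
  proof -
    have j1: "s0 \<le> real j" "1 + 2 powr (1/\<eta>) \<le> real j" "1 / c0 \<le> real j" "1 \<le> real j"
      using J0 j by auto
    define A where "A = T (real j)"
    define B where "B = T (real j + 1)"
    note bf = block_facts[OF j1(1,2), folded A_def B_def]
    have A1: "1 \<le> A" using bf(1) t0 by simp
    have Apos: "0 < A" using A1 by simp
    have Bpos: "0 < B" using A1 bf(2) by simp
    have NA: "N j = nat \<lceil>A\<rceil>" by (simp add: N_def A_def)
    have NB: "N (Suc j) = nat \<lceil>B\<rceil>" by (simp add: N_def B_def add.commute)
    have Nm: "N j \<le> N (Suc j)" unfolding NA NB using bf(2) by (intro nat_mono ceiling_mono)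
    have rNA: "real (N j) = of_int \<lceil>A\<rceil>" using Apos unfolding NA by simp
    have rNB: "real (N (Suc j)) = of_int \<lceil>B\<rceil>" using Bpos unfolding NB by simp
    have card: "real (card {N j..<N (Suc j)}) = real (N (Suc j)) - real (N j)" using Nm by simp
    have cardU: "real (card {N j..<N (Suc j)}) \<le> B - A + 1"
      unfolding card rNA rNB using ceiling_correct[of A] ceiling_correct[of B] by linarith
    have cardL: "B - A - 1 \<le> real (card {N j..<N (Suc j)})"
      unfolding card rNA rNB using ceiling_correct[of A] ceiling_correct[of B] by linarith
    have mem: "A \<le> real k \<and> real k < B" if "k \<in> {N j..<N (Suc j)}" for k
    proof -
      have "N j \<le> k" "k < N (Suc j)" using that by auto
      then have "real (N j) \<le> real k" "real k < real (N (Suc j))" by auto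
      then have "of_int \<lceil>A\<rceil> \<le> real k" "int k < \<lceil>B\<rceil>" unfolding rNA rNB by linarith+
      moreover have "real k < B" using less_ceiling_iff[of "int k" B] \<open>int k < \<lceil>B\<rceil>\<close> by simp
      ultimately show ?thesis using le_of_int_ceiling[of A] by linarith
    qed
    have vj: "v j = G a b (R A)" using veq[OF j1(1)] by (simp add: A_def)
    have vj1: "v (Suc j) = G a b (R B)" using veq[of "Suc j"] j1(1) by (simp add: B_def add.commute)
    have FA: "0 < F A" "F A \<le> 1/2" "0 < R A" "R A \<le> 1/2" "F A \<le> d * R A" using basic[OF bf(1)] R_bounds[OF bf(1)] by auto
    have B0: "t0 \<le> B" using bf(1,2) by simp
    have FB: "0 < F B" "F B \<le> 1/2" "0 < R B" "R B \<le> 1/2" "R B \<le> F B" using basic[OF B0] R_bounds[OF B0] by auto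
    have d_le: "d \<le> Cc" "C \<le> Cc" by (auto simp: Cc_def)
    have GA: "G a b (F A) \<le> K * G a b (R A)"
    proof (rule KG)
      have "d * R A \<le> Cc * R A" using d_le FA by (intro mult_right_mono) auto
      then show "F A \<le> Cc * R A" using FA by linarith
    qed (use FA in auto)
    have GB: "G a b (R B) \<le> K * G a b (F B)"
    proof (rule KG)
      have "1 * F B \<le> Cc * F B" using Cc1 FB by (intro mult_right_mono) auto
      then show "R B \<le> Cc * F B" using FB by linarith
    qed (use FB in auto)
    have up1: "u k \<le> (1 / A) * (K * K * v j)" if k: "k \<in> {N j..<N (Suc j)}" for k
    proof -
      have kk: "A \<le> real k" "real k < B" using mem[OF k] by auto
      have kt0: "t0 \<le> real k" using kk bf(1) by simp
      have Fk: "0 < F (real k)" "F (real k) \<le> 1/2" using basic[OF kt0] by auto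
      have "F (real k) \<le> C * F A" using bf(6)[of "real k"] kk by simp
      also have "\<dots> \<le> Cc * F A" using d_le FA by (intro mult_right_mono) auto
      finally have "G a b (F (real k)) \<le> K * G a b (F A)" using Fk FA by (intro KG) auto
      also have "\<dots> \<le> K * (K * G a b (R A))" using GA K by simp
      finally have g: "G a b (F (real k)) \<le> K * K * v j" using vj by simp
      have "u k = (1 / real k) * G a b (F (real k))" using ueq kt0 by simp
      also have "\<dots> \<le> (1 / A) * (K * K * v j)"
        using g kk Apos G_nonneg by (intro mult_mono) (auto simp: field_simps)
      finally show ?thesis .
    qed
    have low1: "(1 / B) * (v (Suc j) / (K * K)) \<le> u k" if k: "k \<in> {N j..<N (Suc j)}" for k
    proof -
      have kk: "A \<le> real k" "real k < B" using mem[OF k] by auto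
      have kt0: "t0 \<le> real k" using kk bf(1) by simp
      have Fk: "0 < F (real k)" "F (real k) \<le> 1/2" using basic[OF kt0] by auto
      have "F B \<le> C * F (real k)" using bf(7)[of "real k"] kk by simp
      also have "\<dots> \<le> Cc * F (real k)" using d_le Fk by (intro mult_right_mono) auto
      finally have "G a b (F B) \<le> K * G a b (F (real k))" using Fk FB by (intro KG) auto
      then have "K * G a b (F B) \<le> K * (K * G a b (F (real k)))" using K by simp
      then have "v (Suc j) \<le> K * (K * G a b (F (real k)))" using GB vj1 by linarith
      then have g: "v (Suc j) / (K * K) \<le> G a b (F (real k))" using K by (simp add: field_simps)
      have "(1 / B) * (v (Suc j) / (K * K)) \<le> (1 / real k) * G a b (F (real k))"
        using g kk Apos v0 K G_nonneg by (intro mult_mono) (auto simp: field_simps)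
      also have "\<dots> = u k" using ueq kt0 by simp
      finally show ?thesis .
    qed
    have s_up: "sum u {N j..<N (Suc j)} \<le> (exp 2 * K * K) * v j"
    proof -
      have "sum u {N j..<N (Suc j)} \<le> real (card {N j..<N (Suc j)}) * ((1 / A) * (K * K * v j))"
        by (rule sum_bounded_above) (rule up1)
      also have "\<dots> \<le> (B - A + 1) * ((1 / A) * (K * K * v j))"
        using cardU K v0 Apos by (intro mult_right_mono) auto
      also have "\<dots> = ((B - A + 1) / A) * (K * K * v j)" by simp
      also have "(B - A + 1) / A \<le> exp 2"
      proof -
        have "B - A + 1 \<le> A * exp 2" using bf(3) A1 by simp
        then show ?thesis using Apos by (simp add: divide_le_eq mult.commute)
      qed
      then have "((B - A + 1) / A) * (K * K * v j) \<le> exp 2 * (K * K * v j)"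
        using K v0 by (intro mult_right_mono) auto
      finally show ?thesis by (simp add: mult.assoc)
    qed
    have s_low: "v (Suc j) \<le> (K * K / c0) * sum u {N j..<N (Suc j)}"
    proof -
      have "(B - A - 1) / B \<ge> c0"
      proof -
        have "A * exp \<delta> \<le> B" by (rule bf(4))
        then have "A \<le> B * e0" using Bpos by (simp add: e0_def exp_minus field_simps)
        have "exp (real j) \<le> B" by (rule bf(5))
        moreover have "1 + real j \<le> exp (real j)" by (rule exp_ge_add_one_self)
        ultimately have jB: "real j \<le> B" by linarith
        have "1 / c0 \<le> real j" by (rule j1(3))
        then have "1 \<le> c0 * real j" using c0 by (simp add: field_simps)
        also have "\<dots> \<le> c0 * B" using jB c0 by simp
        finally have "1 \<le> c0 * B" .
        then have "B * c0 \<le> B - A - 1" using \<open>A \<le> B * e0\<close> by (simp add: c0_def field_simps)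
        then show ?thesis using Bpos by (simp add: le_divide_eq mult.commute)
      qed
      have "c0 * (v (Suc j) / (K * K)) \<le> ((B - A - 1) / B) * (v (Suc j) / (K * K))"
        using \<open>_ \<ge> c0\<close> v0 K by (intro mult_right_mono) auto
      also have "\<dots> = (B - A - 1) * ((1 / B) * (v (Suc j) / (K * K)))" by simp
      also have "\<dots> \<le> real (card {N j..<N (Suc j)}) * ((1 / B) * (v (Suc j) / (K * K)))"
        using cardL v0 K Bpos by (intro mult_right_mono) auto
      also have "\<dots> \<le> sum u {N j..<N (Suc j)}"
        by (rule sum_bounded_below) (rule low1)
      finally show ?thesis using c0 K by (simp add: field_simps)
    qed
    show ?thesis using Nm s_up s_low by blast
  qed
  have Nbig: "M \<le> N (J0 + M)" for M
  proof -
    have j1: "s0 \<le> real (J0 + M)" "1 \<le> real J0" using J0 by auto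
    have lt: "ln (T (real (J0 + M))) > real (J0 + M) - 1" using lnT(2)[OF j1(1)] .
    have e1: "exp (real (J0 + M) - 1) < exp (ln (T (real (J0 + M))))" using exp_less_mono[OF lt] .
    have tp: "T (real (J0 + M)) > 0" using T_prop(1)[OF j1(1)] t0 by simp
    have "exp (real (J0 + M) - 1) < T (real (J0 + M))" using e1 unfolding exp_ln[OF tp] .
    moreover have "real M + 1 \<le> exp (real M)" by (metis add.commute exp_ge_add_one_self)
    moreover have "exp (real M) \<le> exp (real (J0 + M) - 1)" using j1 by simp
    ultimately have "real M \<le> T (real (J0 + M))" by linarith
    then show ?thesis unfolding N_def by linarith
  qed
  have b1: "\<And>j. j \<ge> J0 \<Longrightarrow> N j \<le> N (Suc j)" using blk by blast
  have b2: "\<And>j. j \<ge> J0 \<Longrightarrow> sum u {N j..<N (Suc j)} \<le> (exp 2 * K * K) * v j" using blk by blast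
  have b3: "\<And>j. j \<ge> J0 \<Longrightarrow> v (Suc j) \<le> (K * K / c0) * sum u {N j..<N (Suc j)}" using blk by blast
  have cc: "exp 2 * K * K \<ge> 0" "K * K / c0 \<ge> 0" using K c0 by auto
  have "summable u \<longleftrightarrow> summable v"
    by (rule block_summable[of u v J0 N "exp 2 * K * K" "K * K / c0", OF u0 v0 b1 b2 b3 Nbig cc])
  then show ?thesis by (simp add: u_def v_def)
qed

end


lemma exp_powr': "exp (x::real) powr y = exp (x * y)" by (simp add: powr_def mult.commute)

lemma supnorm_ge1: "\<bar>fst v $ i\<bar> \<le> supnorm v"
  unfolding supnorm_def by (rule max.coboundedI1) (rule Max_ge, auto)

lemma supnorm_ge2: "\<bar>snd v $ j\<bar> \<le> supnorm v"
  unfolding supnorm_def by (rule max.coboundedI2) (rule Max_ge, auto)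

lemma supnorm_lt: "(\<And>i. \<bar>fst v $ i\<bar> < c) \<Longrightarrow> (\<And>j. \<bar>snd v $ j\<bar> < c) \<Longrightarrow> supnorm v < c"
  unfolding supnorm_def by (auto simp: Max_less_iff)

lemma qnorm_ge: "\<bar>x $ i\<bar> powr (1 / w $ i) \<le> qnorm w x"
  unfolding qnorm_def by (rule Max_ge) auto

lemma qnorm_lt: "(\<And>i. \<bar>x $ i\<bar> powr (1 / w $ i) < c) \<Longrightarrow> qnorm w x < c"
  unfolding qnorm_def by (auto simp: Max_less_iff)

lemma intvec_nz: "q \<in> integer_vectors \<Longrightarrow> q \<noteq> 0 \<Longrightarrow> \<exists>j. 1 \<le> \<bar>q $ j\<bar>"
proof -
  assume q: "q \<in> integer_vectors" "q \<noteq> 0"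
  then obtain j where "q $ j \<noteq> 0" by (metis vec_eq_iff zero_index)
  moreover have "q $ j \<in> \<int>" using q by (simp add: integer_vectors_def)
  ultimately show ?thesis using Ints_nonzero_abs_ge1 by blast
qed

lemma weights_le1:
  fixes w :: "real^'a::finite"
  assumes "\<forall>i. w $ i > 0" "(\<Sum>i\<in>UNIV. w $ i) = 1"
  shows "w $ i \<le> 1"
proof -
  have "w $ i \<le> (\<Sum>i\<in>UNIV. w $ i)" using assms by (intro member_le_sum) (auto intro: less_imp_le)
  then show ?thesis using assms by simp
qed

lemma gflow_fst: "fst (gflow \<alpha> \<beta> s v) $ i = exp (\<alpha> $ i * s) * fst v $ i"
  by (simp add: gflow_def)
lemma gflow_snd: "snd (gflow \<alpha> \<beta> s v) $ j = exp (- \<beta> $ j * s) * snd v $ j"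
  by (simp add: gflow_def)

lemma gflow_zero: "gflow \<alpha> \<beta> s 0 = 0"
  by (simp add: gflow_def vec_eq_iff zero_prod_def)
lemma gflow_zero': "gflow \<alpha> \<beta> s (0, 0) = (0, 0)"
  by (simp add: gflow_def vec_eq_iff)

lemma Lambda_mem: "v \<in> Lambda A \<longleftrightarrow> (\<exists>p q. p \<in> integer_vectors \<and> q \<in> integer_vectors \<and> v = (p + A *v q, q))"
  by (auto simp: Lambda_def)

lemma Delta_bdd:
  fixes \<alpha> :: "real^'m::finite" and \<beta> :: "real^'n::finite" and A :: "real^'n^'m"
  assumes ap: "\<forall>i. \<alpha> $ i > 0" "(\<Sum>i\<in>UNIV. \<alpha> $ i) = 1"
    and bp: "\<forall>j. \<beta> $ j > 0" "(\<Sum>j\<in>UNIV. \<beta> $ j) = 1"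
  shows "bdd_above ((\<lambda>v. ln (1 / supnorm v)) ` (gflow \<alpha> \<beta> s ` Lambda A - {0}))"
proof (rule bdd_aboveI2)
  fix w assume "w \<in> gflow \<alpha> \<beta> s ` Lambda A - {0}"
  then obtain p q where pq: "p \<in> integer_vectors" "q \<in> integer_vectors"
    and w: "w = gflow \<alpha> \<beta> s (p + A *v q, q)" and wn: "w \<noteq> 0"
    by (auto simp: Lambda_def)
  have "exp (- \<bar>s\<bar>) \<le> supnorm w"
  proof (cases "q = 0")
    case False
    then obtain j where j: "1 \<le> \<bar>q $ j\<bar>" using intvec_nz pq by blast
    have "\<beta> $ j * s \<le> \<bar>s\<bar>"
    proof -
      have "\<beta> $ j * s \<le> \<beta> $ j * \<bar>s\<bar>" using bp by (intro mult_left_mono) (auto intro: less_imp_le)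
      also have "\<dots> \<le> 1 * \<bar>s\<bar>" using weights_le1[OF bp] by (intro mult_right_mono) auto
      finally show ?thesis by simp
    qed
    then have "exp (- \<bar>s\<bar>) \<le> exp (- \<beta> $ j * s) * 1" by simp
    also have "\<dots> \<le> exp (- \<beta> $ j * s) * \<bar>q $ j\<bar>" using j by (intro mult_left_mono) auto
    also have "\<dots> = \<bar>snd w $ j\<bar>" by (simp add: w gflow_snd abs_mult)
    also have "\<dots> \<le> supnorm w" by (rule supnorm_ge2)
    finally show ?thesis .
  next
    case True
    have "p \<noteq> 0" using wn True by (auto simp: w gflow_zero' zero_prod_def)
    then obtain i where i: "1 \<le> \<bar>p $ i\<bar>" using intvec_nz pq by blast
    have "- \<bar>s\<bar> \<le> \<alpha> $ i * s"
    proof -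
      have "\<alpha> $ i * (- s) \<le> \<alpha> $ i * \<bar>s\<bar>" using ap by (intro mult_left_mono) (auto intro: less_imp_le)
      then have "- (\<alpha> $ i * s) \<le> \<alpha> $ i * \<bar>s\<bar>" by simp
      also have "\<dots> \<le> 1 * \<bar>s\<bar>" using weights_le1[OF ap] by (intro mult_right_mono) auto
      finally show ?thesis by simp
    qed
    then have "exp (- \<bar>s\<bar>) \<le> exp (\<alpha> $ i * s) * 1" by simp
    also have "\<dots> \<le> exp (\<alpha> $ i * s) * \<bar>p $ i\<bar>" using i by (intro mult_left_mono) auto
    also have "\<dots> = \<bar>fst w $ i\<bar>" using True by (simp add: w gflow_fst abs_mult)
    also have "\<dots> \<le> supnorm w" by (rule supnorm_ge1)
    finally show ?thesis .
  qed
  note le = this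
  have sp: "0 < supnorm w" using le exp_gt_zero[of "- \<bar>s\<bar>"] by linarith
  have "1 / supnorm w \<le> 1 / exp (- \<bar>s\<bar>)" using le sp by (intro divide_left_mono) auto
  then have le2: "1 / supnorm w \<le> exp \<bar>s\<bar>" by (simp add: exp_minus inverse_eq_divide)
  have "ln (1 / supnorm w) \<le> ln (exp \<bar>s\<bar>)" using le2 sp by (subst ln_le_cancel_iff) auto
  then show "ln (1 / supnorm w) \<le> \<bar>s\<bar>" by simp
qed



lemma intvec_uminus: "p \<in> integer_vectors \<Longrightarrow> - p \<in> integer_vectors"
  by (simp add: integer_vectors_def)

lemma dani1:
  fixes \<alpha> :: "real^'m::finite" and \<beta> :: "real^'n::finite" and A :: "real^'n^'m"
  assumes ap: "\<forall>i. \<alpha> $ i > 0" "(\<Sum>i\<in>UNIV. \<alpha> $ i) = 1"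
    and bp: "\<forall>j. \<beta> $ j > 0" "(\<Sum>j\<in>UNIV. \<beta> $ j) = 1"
    and w1: "\<And>i. real CARD('m) * \<alpha> $ i \<le> \<omega>" "\<And>j. real CARD('n) * \<beta> $ j \<le> \<omega>"
    and rho: "\<rho> > 0" and s: "s \<ge> 0"
    and D: "Delta (gflow \<alpha> \<beta> s ` Lambda A) > \<omega> * \<rho>"
  shows "\<exists>p q. p \<in> integer_vectors \<and> q \<in> integer_vectors \<and> q \<noteq> 0 \<and>
        qnorm \<alpha> (A *v q - p) < exp (- s - real CARD('m) * \<rho>) \<and> qnorm \<beta> q < exp (s - real CARD('n) * \<rho>)"
proof -
  define X where "X = gflow \<alpha> \<beta> s ` Lambda A - {0}"
  have "0 < real CARD('m) * \<alpha> $ undefined" using ap by simp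
  then have w0: "\<omega> > 0" using w1(1)[of undefined] by linarith
  have ne: "X \<noteq> {}"
  proof -
    define e :: "real^'m" where "e = (\<chi> i. 1)"
    have "e \<in> integer_vectors" "(0::real^'n) \<in> integer_vectors" by (auto simp: integer_vectors_def e_def)
    then have "(e + A *v 0, 0) \<in> Lambda A" by (auto simp: Lambda_def)
    moreover have "gflow \<alpha> \<beta> s (e + A *v 0, 0) \<noteq> 0"
    proof
      assume "gflow \<alpha> \<beta> s (e + A *v 0, 0) = 0"
      then have "fst (gflow \<alpha> \<beta> s (e + A *v 0, 0)) $ undefined = 0" by simp
      then show False by (simp add: gflow_fst e_def)
    qed
    ultimately show ?thesis by (auto simp: X_def)
  qed
  have bdd: "bdd_above ((\<lambda>v. ln (1 / supnorm v)) ` X)" unfolding X_def by (rule Delta_bdd[OF ap bp])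
  have "\<omega> * \<rho> < (SUP v\<in>X. ln (1 / supnorm v))" using D by (simp add: Delta_def X_def)
  then obtain w where wX: "w \<in> X" and wl: "\<omega> * \<rho> < ln (1 / supnorm w)"
    using less_cSUP_iff[OF ne bdd] by blast
  obtain p q where pq: "p \<in> integer_vectors" "q \<in> integer_vectors"
    and w: "w = gflow \<alpha> \<beta> s (p + A *v q, q)" and wn: "w \<noteq> 0"
    using wX by (auto simp: X_def Lambda_def)
  have sn: "supnorm w < exp (- (\<omega> * \<rho>))"
  proof (cases "supnorm w > 0")
    case True
    have "exp (\<omega> * \<rho>) < exp (ln (1 / supnorm w))" using wl by simp
    then have "exp (\<omega> * \<rho>) < 1 / supnorm w" using True by simp
    then show ?thesis using True by (simp add: exp_minus field_simps)
  next
    case False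
    then show ?thesis using exp_gt_zero[of "- (\<omega> * \<rho>)"] by linarith
  qed
  have ex1: "exp (- (\<omega> * \<rho>)) \<le> 1" using w0 rho by simp
  have comp1: "\<bar>exp (\<alpha> $ i * s) * (p + A *v q) $ i\<bar> < exp (- (\<omega> * \<rho>))" for i
    using supnorm_ge1[of w i] sn by (simp add: w gflow_fst)
  have comp2: "\<bar>exp (- \<beta> $ j * s) * q $ j\<bar> < exp (- (\<omega> * \<rho>))" for j
    using supnorm_ge2[of w j] sn by (simp add: w gflow_snd)
  have qn: "q \<noteq> 0"
  proof
    assume q0: "q = 0"
    then have "p \<noteq> 0" using wn by (auto simp: w gflow_zero' zero_prod_def)
    then obtain i where i: "1 \<le> \<bar>p $ i\<bar>" using intvec_nz pq by blast
    have "0 \<le> \<alpha> $ i * s" using ap s by (intro mult_nonneg_nonneg) (auto intro: less_imp_le)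
    then have "1 \<le> exp (\<alpha> $ i * s)" by simp
    then have "1 * 1 \<le> exp (\<alpha> $ i * s) * \<bar>p $ i\<bar>" using i by (intro mult_mono) auto
    then show False using comp1[of i] q0 ex1 by (simp add: abs_mult)
  qed
  show ?thesis
  proof (intro exI conjI)
    show "- p \<in> integer_vectors" using pq(1) by (rule intvec_uminus)
    show "q \<in> integer_vectors" "q \<noteq> 0" using pq qn by auto
    show "qnorm \<alpha> (A *v q - - p) < exp (- s - real CARD('m) * \<rho>)"
    proof (rule qnorm_lt)
      fix i
      define x where "x = (A *v q - - p) $ i"
      have ai: "\<alpha> $ i > 0" using ap by auto
      have "\<bar>x\<bar> < exp (- (\<omega> * \<rho>) - \<alpha> $ i * s)"
      proof -
        have "exp (\<alpha> $ i * s) * \<bar>x\<bar> < exp (- (\<omega> * \<rho>))"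
          using comp1[of i] by (simp add: x_def abs_mult add.commute)
        then show ?thesis by (simp add: exp_diff field_simps)
      qed
      moreover have "exp (- (\<omega> * \<rho>) - \<alpha> $ i * s) powr (1 / \<alpha> $ i) \<le> exp (- s - real CARD('m) * \<rho>)"
      proof -
        have "(- (\<omega> * \<rho>) - \<alpha> $ i * s) * (1 / \<alpha> $ i) = - (\<omega> * \<rho> / \<alpha> $ i) - s"
          using ai by (simp add: field_simps)
        moreover have "real CARD('m) * \<rho> \<le> \<omega> * \<rho> / \<alpha> $ i"
        proof -
          have "real CARD('m) * \<alpha> $ i * \<rho> \<le> \<omega> * \<rho>" using w1(1)[of i] rho by (intro mult_right_mono) auto
          then show ?thesis using ai by (simp add: field_simps)
        qed
        ultimately show ?thesis by (simp add: exp_powr')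
      qed
      moreover note lt = calculation(1)
      have "\<bar>x\<bar> powr (1 / \<alpha> $ i) < exp (- (\<omega> * \<rho>) - \<alpha> $ i * s) powr (1 / \<alpha> $ i)"
        using ai lt by (intro powr_less_mono2) auto
      ultimately have "\<bar>x\<bar> powr (1 / \<alpha> $ i) < exp (- s - real CARD('m) * \<rho>)" by linarith
      then show "\<bar>(A *v q - - p) $ i\<bar> powr (1 / \<alpha> $ i) < exp (- s - real CARD('m) * \<rho>)" by (simp add: x_def)
    qed
    show "qnorm \<beta> q < exp (s - real CARD('n) * \<rho>)"
    proof (rule qnorm_lt)
      fix j
      have bj: "\<beta> $ j > 0" using bp by auto
      have "\<bar>q $ j\<bar> < exp (- (\<omega> * \<rho>) + \<beta> $ j * s)"
      proof -
        have "exp (- \<beta> $ j * s) * \<bar>q $ j\<bar> < exp (- (\<omega> * \<rho>))"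
          using comp2[of j] by (simp add: abs_mult)
        then show ?thesis by (simp add: exp_diff exp_add exp_minus field_simps)
      qed
      moreover have "exp (- (\<omega> * \<rho>) + \<beta> $ j * s) powr (1 / \<beta> $ j) \<le> exp (s - real CARD('n) * \<rho>)"
      proof -
        have "(- (\<omega> * \<rho>) + \<beta> $ j * s) * (1 / \<beta> $ j) = - (\<omega> * \<rho> / \<beta> $ j) + s"
          using bj by (simp add: field_simps)
        moreover have "real CARD('n) * \<rho> \<le> \<omega> * \<rho> / \<beta> $ j"
        proof -
          have "real CARD('n) * \<beta> $ j * \<rho> \<le> \<omega> * \<rho>" using w1(2)[of j] rho by (intro mult_right_mono) auto
          then show ?thesis using bj by (simp add: field_simps)
        qed
        ultimately show ?thesis by (simp add: exp_powr')
      qed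
      moreover note lt = calculation(1)
      have "\<bar>q $ j\<bar> powr (1 / \<beta> $ j) < exp (- (\<omega> * \<rho>) + \<beta> $ j * s) powr (1 / \<beta> $ j)"
        using bj lt by (intro powr_less_mono2) auto
      ultimately show "\<bar>q $ j\<bar> powr (1 / \<beta> $ j) < exp (s - real CARD('n) * \<rho>)" by linarith
    qed
  qed
qed



lemma dani2:
  fixes \<alpha> :: "real^'m::finite" and \<beta> :: "real^'n::finite" and A :: "real^'n^'m"
  assumes ap: "\<forall>i. \<alpha> $ i > 0" "(\<Sum>i\<in>UNIV. \<alpha> $ i) = 1"
    and bp: "\<forall>j. \<beta> $ j > 0" "(\<Sum>j\<in>UNIV. \<beta> $ j) = 1"
    and w2: "\<And>i. \<omega> \<le> real CARD('m) * \<alpha> $ i" "\<And>j. \<omega> \<le> real CARD('n) * \<beta> $ j"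
    and rho: "\<rho> > 0"
    and pq: "p \<in> integer_vectors" "q \<in> integer_vectors" "q \<noteq> 0"
    and qa: "qnorm \<alpha> (A *v q - p) < exp (- s - real CARD('m) * \<rho>)"
    and qb: "qnorm \<beta> q < exp (s - real CARD('n) * \<rho>)"
  shows "Delta (gflow \<alpha> \<beta> s ` Lambda A) > \<omega> * \<rho>"
proof -
  define w where "w = gflow \<alpha> \<beta> s (- p + A *v q, q)"
  have vL: "(- p + A *v q, q) \<in> Lambda A" using pq intvec_uminus[OF pq(1)] by (auto simp: Lambda_def)
  obtain j0 where j0: "1 \<le> \<bar>q $ j0\<bar>" using intvec_nz pq by blast
  have sp: "0 < supnorm w"
  proof -
    have "0 < \<bar>snd w $ j0\<bar>" using j0 by (simp add: w_def gflow_snd)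
    then show ?thesis using supnorm_ge2[of w j0] by linarith
  qed
  have wn: "w \<noteq> 0" using sp by (auto simp: supnorm_def zero_prod_def)
  have wX: "w \<in> gflow \<alpha> \<beta> s ` Lambda A - {0}" using vL wn by (auto simp: w_def)
  have c1: "\<bar>fst w $ i\<bar> < exp (- (\<omega> * \<rho>))" for i
  proof -
    define x where "x = (A *v q - p) $ i"
    have ai: "\<alpha> $ i > 0" using ap by auto
    have "\<bar>x\<bar> < exp (- s * \<alpha> $ i - real CARD('m) * \<alpha> $ i * \<rho>)"
    proof (cases "x = 0")
      case True then show ?thesis by simp
    next
      case False
      have "\<bar>x\<bar> powr (1 / \<alpha> $ i) < exp (- s - real CARD('m) * \<rho>)"
        using qnorm_ge[of "A *v q - p" i \<alpha>] qa by (simp add: x_def)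
      then have "(\<bar>x\<bar> powr (1 / \<alpha> $ i)) powr (\<alpha> $ i) < exp (- s - real CARD('m) * \<rho>) powr (\<alpha> $ i)"
        using ai by (intro powr_less_mono2) auto
      moreover have "(\<bar>x\<bar> powr (1 / \<alpha> $ i)) powr (\<alpha> $ i) = \<bar>x\<bar>" using ai False by (simp add: powr_powr)
      moreover have "exp (- s - real CARD('m) * \<rho>) powr (\<alpha> $ i) = exp (- s * \<alpha> $ i - real CARD('m) * \<alpha> $ i * \<rho>)"
        by (simp add: exp_powr' algebra_simps)
      ultimately show ?thesis by simp
    qed
    then have "exp (\<alpha> $ i * s) * \<bar>x\<bar> < exp (\<alpha> $ i * s) * exp (- s * \<alpha> $ i - real CARD('m) * \<alpha> $ i * \<rho>)"
      by simp
    also have "\<dots> = exp (- (real CARD('m) * \<alpha> $ i * \<rho>))" by (simp add: exp_add[symmetric] algebra_simps)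
    also have "\<dots> \<le> exp (- (\<omega> * \<rho>))" using w2(1)[of i] rho by (simp add: mult_right_mono)
    finally show ?thesis by (simp add: w_def gflow_fst x_def abs_mult add.commute)
  qed
  have c2: "\<bar>snd w $ j\<bar> < exp (- (\<omega> * \<rho>))" for j
  proof -
    have bj: "\<beta> $ j > 0" using bp by auto
    have "\<bar>q $ j\<bar> < exp (s * \<beta> $ j - real CARD('n) * \<beta> $ j * \<rho>)"
    proof (cases "q $ j = 0")
      case True then show ?thesis by simp
    next
      case False
      have "\<bar>q $ j\<bar> powr (1 / \<beta> $ j) < exp (s - real CARD('n) * \<rho>)"
        using qnorm_ge[of q j \<beta>] qb by simp
      then have "(\<bar>q $ j\<bar> powr (1 / \<beta> $ j)) powr (\<beta> $ j) < exp (s - real CARD('n) * \<rho>) powr (\<beta> $ j)"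
        using bj by (intro powr_less_mono2) auto
      moreover have "(\<bar>q $ j\<bar> powr (1 / \<beta> $ j)) powr (\<beta> $ j) = \<bar>q $ j\<bar>" using bj False by (simp add: powr_powr)
      moreover have "exp (s - real CARD('n) * \<rho>) powr (\<beta> $ j) = exp (s * \<beta> $ j - real CARD('n) * \<beta> $ j * \<rho>)"
        by (simp add: exp_powr' algebra_simps)
      ultimately show ?thesis by simp
    qed
    then have "exp (- \<beta> $ j * s) * \<bar>q $ j\<bar> < exp (- \<beta> $ j * s) * exp (s * \<beta> $ j - real CARD('n) * \<beta> $ j * \<rho>)"
      by simp
    also have "\<dots> = exp (- (real CARD('n) * \<beta> $ j * \<rho>))" by (simp add: exp_add[symmetric] algebra_simps)
    also have "\<dots> \<le> exp (- (\<omega> * \<rho>))" using w2(2)[of j] rho by (simp add: mult_right_mono)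
    finally show ?thesis by (simp add: w_def gflow_snd abs_mult)
  qed
  have "supnorm w < exp (- (\<omega> * \<rho>))" using c1 c2 by (rule supnorm_lt)
  then have "exp (\<omega> * \<rho>) < 1 / supnorm w" using sp by (simp add: exp_minus field_simps)
  then have "\<omega> * \<rho> < ln (1 / supnorm w)" using sp by (metis exp_less_cancel_iff exp_ln divide_pos_pos zero_less_one)
  also have "\<dots> \<le> (SUP v \<in> gflow \<alpha> \<beta> s ` Lambda A - {0}. ln (1 / supnorm v))"
    by (rule cSUP_upper[OF wX Delta_bdd[OF ap bp]])
  finally show ?thesis by (simp add: Delta_def)
qed



theorem proposition3p4:
  fixes \<alpha> :: "real^'m::finite" and \<beta> :: "real^'n::finite"
    and \<psi> :: "real \<Rightarrow> real" and t0 C\<^sub>\<psi> \<eta> :: real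
  assumes alpha_pos: "\<forall>i. \<alpha> $ i > 0" and alpha_sum: "(\<Sum>i\<in>UNIV. \<alpha> $ i) = 1"
    and beta_pos: "\<forall>j. \<beta> $ j > 0" and beta_sum: "(\<Sum>j\<in>UNIV. \<beta> $ j) = 1"
    and t0: "t0 > 1"
    and psi_cont: "continuous_on {t0..} \<psi>"
    and psi_decr: "\<forall>x y. t0 \<le> x \<longrightarrow> x \<le> y \<longrightarrow> \<psi> y \<le> \<psi> x"
    and psi_bounds: "\<forall>t\<ge>t0. 1 / (2 * t) \<le> \<psi> t \<and> \<psi> t < 1 / t"
    and C_psi: "C\<^sub>\<psi> \<ge> 1" and eta: "0 < \<eta>" "\<eta> < 1"
    and F_doubling: "\<forall>t1 t2. t0 \<le> t1 \<longrightarrow> t1 \<le> t2 \<longrightarrow> t2 \<le> t1 * exp ((ln t1) powr \<eta>)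
                        \<longrightarrow> Fpsi \<psi> t2 \<le> C\<^sub>\<psi> * Fpsi \<psi> t1"
  defines "s0 \<equiv> s_of CARD('m) CARD('n) \<psi> t0"
    and "r \<equiv> r_fun CARD('m) CARD('n) \<psi> t0"
    and "d \<equiv> real (CARD('m) + CARD('n))"
  shows "(\<forall>s\<ge>s0. \<exists>!t. t0 \<le> t \<and> s = s_of CARD('m) CARD('n) \<psi> t)
    \<and> continuous_on {s0..} r
    \<and> (\<forall>s\<ge>s0. 0 < r s \<and> r s < 1 / d)
    \<and> (\<exists>C\<^sub>r\<ge>1. \<exists>s_star\<ge>s0. \<forall>s1 s2. s_star \<le> s1 \<longrightarrow> s1 \<le> s2 \<longrightarrow> s2 \<le> s1 + s1 powr \<eta>
          \<longrightarrow> r s2 \<le> C\<^sub>r * r s1)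
    \<and> (\<forall>a b::real. a > 0 \<longrightarrow> b > 0 \<longrightarrow>
         (\<not> summable (\<lambda>k::nat. if t0 \<le> real k
              then (1 / real k) * Fpsi \<psi> (real k) powr a * (ln (1 / Fpsi \<psi> (real k))) powr b else 0)
          \<longleftrightarrow> \<not> summable (\<lambda>k::nat. if s0 \<le> real k
              then r (real k) powr a * (ln (1 / r (real k))) powr b else 0)))
    \<and> (\<forall>A :: real^'n^'m.
         ((\<forall>\<^sub>F s in at_top. Delta (gflow \<alpha> \<beta> s ` Lambda A) > omega1 \<alpha> \<beta> * r s)
             \<longrightarrow> psi_Dirichlet \<alpha> \<beta> \<psi> A)
       \<and> ((\<forall>S. \<exists>s\<ge>S. Delta (gflow \<alpha> \<beta> s ` Lambda A) \<le> omega2 \<alpha> \<beta> * r s)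
             \<longrightarrow> \<not> psi_Dirichlet \<alpha> \<beta> \<psi> A))"
proof -
  have m1: "CARD('m) \<ge> 1" and n1: "CARD('n) \<ge> 1" by (simp_all add: Suc_le_eq)
  interpret R: rsetup "CARD('m)" "CARD('n)" \<psi> t0 "C\<^sub>\<psi>" \<eta>
    using m1 n1 t0 psi_cont psi_decr psi_bounds C_psi eta F_doubling by unfold_locales auto
  have s0e: "s0 = R.s0" by (simp add: s0_def R.s0_def R.S_def)
  have re: "r = R.r" by (simp add: r_def R.r_def)
  have de: "d = R.d" by (simp add: d_def R.d_def)
  have P1: "\<forall>s\<ge>s0. \<exists>!t. t0 \<le> t \<and> s = s_of CARD('m) CARD('n) \<psi> t"
    using R.ex1 unfolding s0e R.S_def by blast
  have P2: "continuous_on {s0..} r" using R.r_cont s0e re by simp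
  have P3: "\<forall>s\<ge>s0. 0 < r s \<and> r s < 1 / d" using R.r_bounds s0e re de by simp
  have P4: "\<exists>C\<^sub>r\<ge>1. \<exists>s_star\<ge>s0. \<forall>s1 s2. s_star \<le> s1 \<longrightarrow> s1 \<le> s2 \<longrightarrow> s2 \<le> s1 + s1 powr \<eta>
          \<longrightarrow> r s2 \<le> C\<^sub>r * r s1" using R.partA s0e re by simp
  have P5: "\<forall>a b::real. a > 0 \<longrightarrow> b > 0 \<longrightarrow>
         (\<not> summable (\<lambda>k::nat. if t0 \<le> real k
              then (1 / real k) * Fpsi \<psi> (real k) powr a * (ln (1 / Fpsi \<psi> (real k))) powr b else 0)
          \<longleftrightarrow> \<not> summable (\<lambda>k::nat. if s0 \<le> real k
              then r (real k) powr a * (ln (1 / r (real k))) powr b else 0))"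
    using R.partB unfolding s0e re by blast
  have w1: "\<And>i. real CARD('m) * \<alpha> $ i \<le> omega1 \<alpha> \<beta>" "\<And>j. real CARD('n) * \<beta> $ j \<le> omega1 \<alpha> \<beta>"
    unfolding omega1_def by (rule Max_ge; auto)+
  have w2: "\<And>i. omega2 \<alpha> \<beta> \<le> real CARD('m) * \<alpha> $ i" "\<And>j. omega2 \<alpha> \<beta> \<le> real CARD('n) * \<beta> $ j"
    unfolding omega2_def by (rule Min_le; auto)+
  have P6: "((\<forall>\<^sub>F s in at_top. Delta (gflow \<alpha> \<beta> s ` Lambda A) > omega1 \<alpha> \<beta> * r s)
             \<longrightarrow> psi_Dirichlet \<alpha> \<beta> \<psi> A)
       \<and> ((\<forall>S. \<exists>s\<ge>S. Delta (gflow \<alpha> \<beta> s ` Lambda A) \<le> omega2 \<alpha> \<beta> * r s)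
             \<longrightarrow> \<not> psi_Dirichlet \<alpha> \<beta> \<psi> A)" for A :: "real^'n^'m"
  proof (intro conjI impI)
    assume "\<forall>\<^sub>F s in at_top. Delta (gflow \<alpha> \<beta> s ` Lambda A) > omega1 \<alpha> \<beta> * r s"
    then obtain S1 where S1: "\<And>s. s \<ge> S1 \<Longrightarrow> Delta (gflow \<alpha> \<beta> s ` Lambda A) > omega1 \<alpha> \<beta> * r s"
      by (auto simp: eventually_at_top_linorder)
    show "psi_Dirichlet \<alpha> \<beta> \<psi> A"
      unfolding psi_Dirichlet_def eventually_at_top_linorder
    proof (rule exI[of _ "max t0 (exp (max S1 0))"], intro allI impI)
      fix t assume t: "max t0 (exp (max S1 0)) \<le> t"
      have tt0: "t0 \<le> t" using t by simp
      have "exp (max S1 0) \<le> t" using t by simp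
      then have "max S1 0 \<le> ln t" using t0 tt0
        by (metis exp_gt_zero exp_le_cancel_iff exp_ln order_less_le_trans)
      then have sS: "max S1 0 \<le> R.S t" using R.S_ge[OF tt0] by linarith
      define s where "s = R.S t"
      have rs: "r s = R.R t" using re R.r_eq R.T_S[OF tt0] by (simp add: s_def)
      have rho: "R.R t > 0" using R.R_bounds[OF tt0] by simp
      have D: "Delta (gflow \<alpha> \<beta> s ` Lambda A) > omega1 \<alpha> \<beta> * R.R t" using S1[of s] sS rs by (simp add: s_def)
      obtain p q where pq: "p \<in> integer_vectors" "q \<in> integer_vectors" "q \<noteq> 0"
        "qnorm \<alpha> (A *v q - p) < exp (- s - real CARD('m) * R.R t)" "qnorm \<beta> q < exp (s - real CARD('n) * R.R t)"
        using dani1[OF alpha_pos alpha_sum beta_pos beta_sum w1 rho _ D] sS by (auto simp: s_def)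
      have "exp (- s - real CARD('m) * R.R t) = \<psi> t" using R.exp_S1[OF tt0] by (simp add: s_def)
      moreover have "exp (s - real CARD('n) * R.R t) = t" using R.exp_S2[OF tt0] by (simp add: s_def)
      ultimately show "\<exists>p q. p \<in> integer_vectors \<and> q \<in> integer_vectors \<and> q \<noteq> 0 \<and>
        qnorm \<alpha> (A *v q - p) < \<psi> t \<and> qnorm \<beta> q < t" using pq by auto
    qed
  next
    assume unb: "\<forall>S. \<exists>s\<ge>S. Delta (gflow \<alpha> \<beta> s ` Lambda A) \<le> omega2 \<alpha> \<beta> * r s"
    show "\<not> psi_Dirichlet \<alpha> \<beta> \<psi> A"
    proof
      assume "psi_Dirichlet \<alpha> \<beta> \<psi> A"
      then obtain N where N: "\<And>t. t \<ge> N \<Longrightarrow> \<exists>p q. p \<in> integer_vectors \<and> q \<in> integer_vectors \<and> q \<noteq> 0 \<and>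
        qnorm \<alpha> (A *v q - p) < \<psi> t \<and> qnorm \<beta> q < t"
        unfolding psi_Dirichlet_def eventually_at_top_linorder by blast
      define t1 where "t1 = max N t0"
      have t1: "t0 \<le> t1" by (simp add: t1_def)
      obtain s where s: "s \<ge> max (R.S t1) R.s0" and D: "Delta (gflow \<alpha> \<beta> s ` Lambda A) \<le> omega2 \<alpha> \<beta> * r s"
        using unb by blast
      have ss0: "R.s0 \<le> s" using s by simp
      define t where "t = R.T s"
      have tt0: "t0 \<le> t" and St: "R.S t = s" using R.T_prop[OF ss0] by (auto simp: t_def)
      have "t1 \<le> t"
      proof (rule ccontr)
        assume "\<not> t1 \<le> t"
        then have "R.S t < R.S t1" using R.S_strict[OF tt0] by simp
        then show False using s St by simp
      qed
      then have "N \<le> t" by (simp add: t1_def)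
      then obtain p q where pq: "p \<in> integer_vectors" "q \<in> integer_vectors" "q \<noteq> 0"
        "qnorm \<alpha> (A *v q - p) < \<psi> t" "qnorm \<beta> q < t" using N by blast
      have rs: "r s = R.R t" using re R.r_eq by (simp add: t_def)
      have rho: "R.R t > 0" using R.R_bounds[OF tt0] by simp
      have "\<psi> t = exp (- s - real CARD('m) * R.R t)" using R.exp_S1[OF tt0] St by simp
      moreover have "t = exp (s - real CARD('n) * R.R t)" using R.exp_S2[OF tt0] St by simp
      ultimately have "Delta (gflow \<alpha> \<beta> s ` Lambda A) > omega2 \<alpha> \<beta> * R.R t"
        using dani2[OF alpha_pos alpha_sum beta_pos beta_sum w2 rho pq(1,2,3)] pq(4,5) by simp
      then show False using D rs by simp
    qed
  qed
  show ?thesis using P1 P2 P3 P4 P5 P6 by blast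
qed


end
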